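(* Let $p\ge1$, let $s_1,\dots,s_p\in\mathbb{Z}$ with at least one $s_j\le0$, and let $z_1,\dots,z_p$ be complex numbers with $|z_j|<1$ for all $j$. Then $\mathrm{La}_{s_1,\dots,s_p}(z_1,\dots,z_p)$ is a finite linear combination of multiple polylogarithms $\mathrm{La}_{s'_1,\dots,s'_q}(z_1^*,\dots,z_q^* )$ with $0\le q\le p$, all $s'_j\ge1$, each $z_i^*$ a product of some of the $z_j$, and $\sum_{j=1}^qs'_j\le\sum_{j=1}^p\max(0,s_j)$; the coefficients are polynomials with rational coefficients in the quantities $(1-z_{j_1}\cdots z_{j_m})^{-1}$ ($m\ge1$, $1\le j_1<\cdots<j_m\le p$) and $z_j^{\pm1}$ ($1\le j\le p$).
   Context: $\mathrm{La}_{s_1,\dots,s_p}(z_1,\dots,z_p)=\sum_{k_1\ge k_2\ge\cdots\ge k_p\ge1}\frac{z_1^{k_1}\cdots z_p^{k_p}}{k_1^{s_1}\cdots k_p^{s_p}}$; the polylogarithm of depth $0$ is the constant $1$. *)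

theory Defs
  imports "HOL-Analysis.Analysis"
begin

definition La_index :: "nat \<Rightarrow> nat list set" where
  "La_index p = {ks. length ks = p \<and> sorted_wrt (\<ge>) ks \<and> (\<forall>k\<in>set ks. 1 \<le> k)}"

text \<open>Depth 0 gives the constant 1 (index set is the singleton of the empty list).\<close>
definition La :: "int list \<Rightarrow> complex list \<Rightarrow> complex" where
  "La s z = infsum (\<lambda>ks. \<Prod>j<length s. (z ! j) ^ (ks ! j) / (of_nat (ks ! j)) powi (s ! j))
                    (La_index (length s))"

datatype cexpr =
    CConst rat
  | CInvOneMinus "nat set"
  | CZ nat
  | CZinv nat
  | CAdd cexpr cexpr
  | CMul cexpr cexpr

fun ceval :: "cexpr \<Rightarrow> complex list \<Rightarrow> complex" where
  "ceval (CConst c) z = of_rat c"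
| "ceval (CInvOneMinus J) z = inverse (1 - (\<Prod>j\<in>J. z ! j))"
| "ceval (CZ j) z = z ! j"
| "ceval (CZinv j) z = inverse (z ! j)"
| "ceval (CAdd a b) z = ceval a z + ceval b z"
| "ceval (CMul a b) z = ceval a z * ceval b z"

fun cexpr_wf :: "nat \<Rightarrow> cexpr \<Rightarrow> bool" where
  "cexpr_wf p (CConst c) = True"
| "cexpr_wf p (CInvOneMinus J) = (J \<noteq> {} \<and> J \<subseteq> {..<p})"
| "cexpr_wf p (CZ j) = (j < p)"
| "cexpr_wf p (CZinv j) = (j < p)"
| "cexpr_wf p (CAdd a b) = (cexpr_wf p a \<and> cexpr_wf p b)"
| "cexpr_wf p (CMul a b) = (cexpr_wf p a \<and> cexpr_wf p b)"

end

theory Submission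
  imports Defs
begin


lemma summable_pow_geom:
  fixes r :: real
  assumes "0 \<le> r" "r < 1"
  shows "summable (\<lambda>n. real n ^ m * r ^ n)"
proof -
  have cr: "conv_radius (\<lambda>n. real n ^ m) = 1"
  proof (rule conv_radius_ratio_limit_nonzero[of _ 1])
    have "(\<lambda>n. (real n / real (Suc n)) ^ m) \<longlonglongrightarrow> 1 ^ m"
      by (intro tendsto_power LIMSEQ_n_over_Suc_n)
    then show "(\<lambda>n. norm (real n ^ m) / norm (real (Suc n) ^ m)) \<longlonglongrightarrow> 1"
      by (simp add: power_divide)
  qed auto
  have "ereal (norm r) < conv_radius (\<lambda>n. real n ^ m)" using assms cr by simp
  from summable_in_conv_radius[OF this] show ?thesis .
qed

lemma prod_lists_summable:
  fixes f :: "nat \<Rightarrow> nat \<Rightarrow> real"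
  assumes "\<And>i k. f i k \<ge> 0" "\<And>i. i < q \<Longrightarrow> f i summable_on UNIV"
  shows "(\<lambda>ks. \<Prod>i<q. f i (ks!i)) summable_on {ks. length ks = q}"
  using assms
proof (induction q arbitrary: f)
  case 0
  have "{ks::nat list. length ks = 0} = {[]}" by auto
  then show ?case by simp
next
  case (Suc q)
  define G where "G ks = (\<Prod>i<q. f (Suc i) (ks!i))" for ks
  have G: "G summable_on {ks. length ks = q}" unfolding G_def
    by (rule Suc.IH) (use Suc.prems in auto)
  have bij: "bij_betw (\<lambda>(k,ks). k#ks) (UNIV \<times> {ks. length ks = q}) {ks. length ks = Suc q}"
    by (rule bij_betwI[where g="\<lambda>ks. (hd ks, tl ks)"]) (auto simp: length_Suc_conv)
  define S where "S = infsum G {ks. length ks = q}"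
  have h1: "((\<lambda>ks. f 0 k * G ks) has_sum f 0 k * S) {ks. length ks = q}" for k
    unfolding S_def by (rule has_sum_cmult_right) (use G in auto)
  have h2: "(\<lambda>k. f 0 k * S) summable_on UNIV"
    by (rule summable_on_cmult_left) (use Suc.prems in auto)
  have "(\<lambda>(k,ks). f 0 k * G ks) summable_on (UNIV \<times> {ks. length ks = q})"
    apply (rule summable_on_SigmaI[where g="\<lambda>k. f 0 k * S"])
    using h1 h2 Suc.prems by (auto simp: G_def intro!: mult_nonneg_nonneg prod_nonneg)
  moreover have "(\<Prod>i<Suc q. f i ((k#ks)!i)) = f 0 k * G ks" for k ks
    unfolding G_def prod.lessThan_Suc_shift by simp
  ultimately have "(\<lambda>x. (\<lambda>ks. \<Prod>i<Suc q. f i (ks!i)) (case x of (k,ks) \<Rightarrow> k#ks)) summable_on (UNIV \<times> {ks. length ks = q})"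
    by (simp add: case_prod_unfold)
  then show ?case using summable_on_reindex_bij_betw[OF bij] by blast
qed

definition tm :: "int list \<Rightarrow> complex list \<Rightarrow> nat list \<Rightarrow> complex" where
  "tm s w ks = (\<Prod>j<length s. (w ! j) ^ (ks ! j) / (of_nat (ks ! j)) powi (s ! j))"

lemma La_tm: "La s w = infsum (tm s w) (La_index (length s))"
  unfolding La_def tm_def ..

lemma norm_factor_bound:
  fixes w :: complex
  assumes "k \<ge> 1"
  shows "norm (w ^ k / (of_nat k) powi s) \<le> norm w ^ k * real k ^ nat \<bar>s\<bar>"
proof -
  have "norm (w ^ k / (of_nat k) powi s) = norm w ^ k / (real k powi s)"
    by (simp add: norm_divide norm_power norm_power_int)
  also have "\<dots> \<le> norm w ^ k * real k ^ nat \<bar>s\<bar>"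
  proof (cases "s \<ge> 0")
    case True
    have "real k powi s \<ge> 1" using assms True
      by (metis of_nat_1 of_nat_le_iff one_le_power_int)
    then have "norm w ^ k / (real k powi s) \<le> norm w ^ k"
      by (simp add: divide_le_eq mult_le_cancel_left1)
    also have "\<dots> \<le> norm w ^ k * real k ^ nat \<bar>s\<bar>"
      using assms by (simp add: mult_le_cancel_left1 one_le_power)
    finally show ?thesis .
  next
    case False
    then have "real k powi s = inverse (real k ^ nat \<bar>s\<bar>)"
      by (simp add: power_int_def power_inverse)
    then show ?thesis by (simp add: divide_inverse)
  qed
  finally show ?thesis .
qed

lemma tm_summable:
  assumes "length w = length s" "\<And>i. i < length s \<Longrightarrow> norm (w!i) < 1"
  shows "tm s w summable_on La_index (length s)"
proof -
  define q where "q = length s"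
  define f where "f i k = norm (w!i) ^ k * real k ^ nat \<bar>s!i\<bar>" for i k
  have fs: "f i summable_on UNIV" if "i < q" for i
  proof -
    have "summable (f i)" unfolding f_def
      using summable_pow_geom[of "norm (w!i)" "nat \<bar>s!i\<bar>"] assms(2) that q_def
      by (simp add: mult.commute)
    then show ?thesis by (subst summable_on_UNIV_nonneg_real_iff) (auto simp: f_def)
  qed
  have "(\<lambda>ks. \<Prod>i<q. f i (ks!i)) summable_on {ks. length ks = q}"
    by (rule prod_lists_summable[OF _ fs]) (auto simp: f_def)
  then have "(\<lambda>ks. \<Prod>i<q. f i (ks!i)) summable_on La_index q"
    by (rule summable_on_subset_banach) (auto simp: La_index_def)
  then have A: "(\<lambda>ks. norm (\<Prod>i<q. f i (ks!i))) summable_on La_index q"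
    by (rule summable_on_cong[THEN iffD1, rotated])
       (auto simp: f_def intro!: abs_of_nonneg[symmetric] prod_nonneg)
  have "(\<lambda>ks. norm (tm s w ks)) summable_on La_index q"
  proof (rule Infinite_Sum.abs_summable_on_comparison_test[OF A])
    fix ks assume ks: "ks \<in> La_index q"
    have "norm (tm s w ks) = (\<Prod>i<q. norm ((w ! i) ^ (ks ! i) / (of_nat (ks ! i)) powi (s ! i)))"
      by (simp add: tm_def q_def prod_norm)
    also have "\<dots> \<le> (\<Prod>i<q. f i (ks!i))"
    proof (rule prod_mono)
      fix i assume "i \<in> {..<q}"
      then have "ks!i \<ge> 1" using ks by (auto simp: La_index_def)
      then show "0 \<le> norm ((w ! i) ^ (ks ! i) / (of_nat (ks ! i)) powi (s ! i)) \<and>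
           norm ((w ! i) ^ (ks ! i) / (of_nat (ks ! i)) powi (s ! i)) \<le> f i (ks!i)"
        unfolding f_def by (auto intro: norm_factor_bound)
    qed
    also have "\<dots> \<le> norm (\<Prod>i<q. f i (ks!i))" by simp
    finally show "norm (tm s w ks) \<le> norm (\<Prod>i<q. f i (ks!i))" .
  qed
  then show ?thesis unfolding q_def using summable_on_iff_abs_summable_on_complex by blast
qed



definition ins :: "nat \<Rightarrow> 'a \<Rightarrow> 'a list \<Rightarrow> 'a list" where
  "ins j k xs = map (\<lambda>i. if i < j then xs!i else if i = j then k else xs!(i-1)) [0..<Suc (length xs)]"

definition del :: "nat \<Rightarrow> 'a list \<Rightarrow> 'a list" where
  "del j xs = map (\<lambda>i. if i < j then xs!i else xs!(Suc i)) [0..<length xs - 1]"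

lemma length_ins[simp]: "length (ins j k xs) = Suc (length xs)"
  by (simp add: ins_def)

lemma length_del[simp]: "length (del j xs) = length xs - 1"
  by (simp add: del_def)

lemma nth_ins: "i \<le> length xs \<Longrightarrow> ins j k xs ! i = (if i < j then xs!i else if i = j then k else xs!(i-1))"
  unfolding ins_def by (simp del: upt_Suc)

lemma nth_del: "i < length xs - 1 \<Longrightarrow> del j xs ! i = (if i < j then xs!i else xs!(Suc i))"
  unfolding del_def by simp

lemma del_ins[simp]: "j \<le> length xs \<Longrightarrow> del j (ins j k xs) = xs"
  by (rule nth_equalityI) (auto simp: nth_del nth_ins)

lemma ins_nth_del: "j < length xs \<Longrightarrow> ins j (xs!j) (del j xs) = xs"
  by (rule nth_equalityI) (auto simp: nth_del nth_ins)

lemma ins_nth_same[simp]: "j \<le> length xs \<Longrightarrow> ins j k xs ! j = k"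
  by (simp add: nth_ins)

lemma del_map: "del j (map f xs) = map f (del j xs)"
  by (rule nth_equalityI) (auto simp: nth_del)

lemma La_index_nth: "ks \<in> La_index m \<longleftrightarrow>
   length ks = m \<and> (\<forall>i. Suc i < m \<longrightarrow> ks!Suc i \<le> ks!i) \<and> (\<forall>i<m. 1 \<le> ks!i)"
proof -
  have t: "transp (\<lambda>x y::nat. y \<le> x)" by (auto simp: transp_def)
  show ?thesis
    unfolding La_index_def using sorted_wrt_iff_nth_Suc_transp[OF t, of ks]
    by (auto simp: all_set_conv_all_nth)
qed

definition lo :: "nat \<Rightarrow> nat list \<Rightarrow> nat" where
  "lo j ks = (if j < length ks then ks!j else 1)"

definition fib :: "nat \<Rightarrow> nat list \<Rightarrow> nat set" where
  "fib j ks = {k. lo j ks \<le> k \<and> (0 < j \<longrightarrow> k \<le> ks!(j-1))}"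

lemma ins_in_La_index:
  assumes "ks \<in> La_index m" "j \<le> m" "k \<in> fib j ks"
  shows "ins j k ks \<in> La_index (Suc m)"
proof -
  have L: "length ks = m" and S: "\<And>i. Suc i < m \<Longrightarrow> ks!Suc i \<le> ks!i" and P: "\<And>i. i < m \<Longrightarrow> 1 \<le> ks!i"
    using assms(1) by (auto simp: La_index_nth)
  have k1: "lo j ks \<le> k" and k2: "0 < j \<Longrightarrow> k \<le> ks!(j-1)" using assms(3) by (auto simp: fib_def)
  have lo1: "1 \<le> lo j ks" using P L by (auto simp: lo_def)
  have "ins j k ks ! Suc i \<le> ins j k ks ! i" if "Suc i < Suc m" for i
  proof -
    consider "Suc i < j" | "Suc i = j" | "i = j" | "i > j" by linarith
    then show ?thesis
    proof cases
      case 1 then show ?thesis using that L S[of i] assms(2) by (simp add: nth_ins)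
    next
      case 2 then show ?thesis using that L k2 by (auto simp: nth_ins)
    next
      case 3 then show ?thesis using that L k1 by (auto simp: nth_ins lo_def)
    next
      case 4 then show ?thesis using that L S[of "i-1"] by (auto simp: nth_ins)
    qed
  qed
  moreover have "1 \<le> ins j k ks ! i" if "i < Suc m" for i
    using that L P k1 lo1 assms(2) by (auto simp: nth_ins)
  ultimately show ?thesis using L by (auto simp: La_index_nth)
qed

lemma del_in_La_index:
  assumes "ks \<in> La_index (Suc m)" "j \<le> m"
  shows "del j ks \<in> La_index m" "ks!j \<in> fib j (del j ks)"
proof -
  have L: "length ks = Suc m" and S: "\<And>i. Suc i < Suc m \<Longrightarrow> ks!Suc i \<le> ks!i" and P: "\<And>i. i < Suc m \<Longrightarrow> 1 \<le> ks!i"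
    using assms(1) by (auto simp: La_index_nth)
  have "del j ks ! Suc i \<le> del j ks ! i" if "Suc i < m" for i
  proof -
    consider "Suc i < j" | "Suc i = j" | "i \<ge> j" by linarith
    then show ?thesis
    proof cases
      case 1 then show ?thesis using that L S by (simp add: nth_del)
    next
      case 2 then show ?thesis using that L S[of i] S[of "Suc i"] by (auto simp: nth_del)
    next
      case 3 then show ?thesis using that L S[of "Suc i"] by (auto simp: nth_del)
    qed
  qed
  moreover have "1 \<le> del j ks ! i" if "i < m" for i
    using that L P by (auto simp: nth_del)
  ultimately show "del j ks \<in> La_index m" using L by (auto simp: La_index_nth)
  have "lo j (del j ks) \<le> ks!j"
    using L S[of j] P[of j] assms(2) by (auto simp: lo_def nth_del)
  moreover have "ks!j \<le> del j ks ! (j-1)" if "0 < j"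
    using L S[of "j-1"] that assms(2) by (auto simp: nth_del)
  ultimately show "ks!j \<in> fib j (del j ks)" by (auto simp: fib_def)
qed

lemma bij_ins:
  assumes "j \<le> m"
  shows "bij_betw (\<lambda>(ks,k). ins j k ks) (Sigma (La_index m) (fib j)) (La_index (Suc m))"
proof (rule bij_betwI[where g="\<lambda>ks. (del j ks, ks!j)"])
  show "(\<lambda>(ks, k). ins j k ks) \<in> Sigma (La_index m) (fib j) \<rightarrow> La_index (Suc m)"
    using ins_in_La_index assms by auto
  show "(\<lambda>ks. (del j ks, ks ! j)) \<in> La_index (Suc m) \<rightarrow> Sigma (La_index m) (fib j)"
    using del_in_La_index assms by auto
  show "(\<lambda>ks. (del j ks, ks ! j)) (case x of (ks, k) \<Rightarrow> ins j k ks) = x" if "x \<in> Sigma (La_index m) (fib j)" for x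
    using that assms by (auto simp: La_index_def)
  show "(case (del j y, y ! j) of (ks, k) \<Rightarrow> ins j k ks) = y" if "y \<in> La_index (Suc m)" for y
    using that assms ins_nth_del[of j y] by (auto simp: La_index_def)
qed

lemma has_sum_split:
  fixes F :: "nat list \<Rightarrow> complex"
  assumes "(F has_sum S) (La_index (Suc m))" "j \<le> m"
  assumes "\<And>ks. ks \<in> La_index m \<Longrightarrow> ((\<lambda>k. F (ins j k ks)) has_sum G ks) (fib j ks)"
  shows "(G has_sum S) (La_index m)"
proof -
  have "((\<lambda>x. F ((\<lambda>(ks,k). ins j k ks) x)) has_sum S) (Sigma (La_index m) (fib j))"
    using has_sum_reindex_bij_betw[OF bij_ins[OF assms(2)]] assms(1) by blast
  then show ?thesis
    by (rule has_sum_Sigma') (use assms(3) in auto)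
qed

lemma prod_split_at:
  fixes h :: "nat \<Rightarrow> 'a::comm_monoid_mult"
  assumes "j \<le> m"
  shows "(\<Prod>i<Suc m. h i) = h j * (\<Prod>i<m. h (if i < j then i else Suc i))"
proof -
  have "(\<Prod>i<Suc m. h i) = h j * (\<Prod>i\<in>{..<Suc m} - {j}. h i)"
    using assms by (subst prod.remove[of _ j]) auto
  also have "(\<Prod>i\<in>{..<Suc m} - {j}. h i) = (\<Prod>i<m. h (if i < j then i else Suc i))"
  proof (rule prod.reindex_bij_witness[where j="\<lambda>i. if i < j then i else i - 1" and i="\<lambda>i. if i < j then i else Suc i"])
  qed (use assms in auto)
  finally show ?thesis .
qed

lemma tm_ins:
  assumes "length s = Suc m" "length w = Suc m" "length ks = m" "j \<le> m"
  shows "tm s w (ins j k ks) = (w!j)^k / (of_nat k) powi (s!j) * tm (del j s) (del j w) ks"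
  unfolding tm_def length_del assms(1)
  apply (subst prod_split_at[OF assms(4)])
  apply (rule arg_cong2[where f="(*)"])
  using assms by (auto simp: nth_ins nth_del intro!: prod.cong)

lemma tm_update:
  assumes "i < length s" "length w = length s" "ks!i \<noteq> 0"
  shows "tm s w ks * (of_nat (ks!i))^a * c^(ks!i) = tm (s[i := s!i - int a]) (w[i := w!i * c]) ks"
proof -
  have *: "(w!i * c)^(ks!i) / (of_nat (ks!i)) powi (s!i - int a) =
           (w!i)^(ks!i) / (of_nat (ks!i)) powi (s!i) * ((of_nat (ks!i))^a * c^(ks!i))"
    using assms(3) by (simp add: power_int_diff power_mult_distrib field_simps)
  show ?thesis
    unfolding tm_def using assms
    by (simp add: prod.remove[of "{..<length s}" i] *)
qed




lemma has_sum_sum_fin: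
  fixes f :: "'i \<Rightarrow> 'a \<Rightarrow> complex"
  assumes "finite I" "\<And>i. i \<in> I \<Longrightarrow> (f i has_sum S i) A"
  shows "((\<lambda>x. \<Sum>i\<in>I. f i x) has_sum (\<Sum>i\<in>I. S i)) A"
  using assms
proof (induction I rule: finite_induct)
  case empty then show ?case by simp
next
  case (insert a F)
  then show ?case by (simp add: has_sum_add)
qed

lemma tm_has_sum:
  assumes "length s = m" "length w = m" "\<And>i. i < m \<Longrightarrow> norm (w!i) < 1"
  shows "(tm s w has_sum La s w) (La_index m)"
  using tm_summable[of w s] assms by (simp add: La_tm has_sum_infsum)

lemma binom_minus_one:
  fixes x :: complex
  shows "(x - 1)^n = (\<Sum>l\<le>n. of_nat (n choose l) * (-1)^(n-l) * x^l)"
  using binomial_ring[of x "-1" n] by (simp add: mult_ac)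

lemma binom_minus_one':
  fixes x :: complex
  shows "(x - 1)^n = x^n + (\<Sum>l<n. of_nat (n choose l) * (-1)^(n-l) * x^l)"
  unfolding binom_minus_one by (simp add: lessThan_Suc_atMost[symmetric])

lemma tail_telescope:
  fixes g :: "nat \<Rightarrow> complex"
  assumes "summable (\<lambda>k. norm (g k))"
  shows "((\<lambda>k. g k - g (Suc k)) has_sum g a) {a..}"
proof -
  have lim: "(\<lambda>i. g (i + a)) \<longlonglongrightarrow> 0"
    using summable_LIMSEQ_zero[OF summable_norm_cancel[OF assms]] by (rule LIMSEQ_ignore_initial_segment[where k=a, simplified])
  have sums: "(\<lambda>i. g (i + a) - g (Suc (i + a))) sums (g a)"
    using telescope_sums'[OF lim] by simp
  have ns: "summable (\<lambda>i. norm (g (i + a)))"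
    using assms by (rule summable_ignore_initial_segment)
  have ns2: "summable (\<lambda>i. norm (g (Suc (i + a))))"
    using summable_ignore_initial_segment[OF assms, of "Suc a"] by simp
  have "summable (\<lambda>i. norm (g (i + a) - g (Suc (i + a))))"
    by (rule summable_comparison_test[OF _ summable_add[OF ns ns2]]) (auto intro: norm_triangle_ineq4)
  then have "((\<lambda>i. g (i + a) - g (Suc (i + a))) has_sum g a) UNIV"
    by (rule norm_summable_imp_has_sum[OF _ sums])
  moreover have "{a..} = (\<lambda>i. i + a) ` UNIV"
    by (auto simp: image_iff) presburger
  moreover have "inj (\<lambda>i::nat. i + a)" by (auto simp: inj_def)
  ultimately show ?thesis
    using has_sum_reindex[of "\<lambda>i::nat. i + a" UNIV "\<lambda>k. g k - g (Suc k)" "g a"]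
    by (simp add: o_def)
qed

lemma g_summable:
  fixes c :: complex
  assumes "norm c < 1"
  shows "summable (\<lambda>k. norm ((of_nat k - 1)^n * c^k))"
proof (rule summable_comparison_test'[where N=1])
  show "summable (\<lambda>k. real k ^ n * norm c ^ k)"
    using summable_pow_geom[of "norm c" n] assms by simp
  fix k :: nat assume "1 \<le> k"
  then have "norm (of_nat k - 1 :: complex) \<le> real k"
  proof -
    have "(of_nat k - 1 :: complex) = of_nat (k - 1)" using \<open>1 \<le> k\<close> by (simp add: of_nat_diff)
    then show ?thesis by simp
  qed
  then show "norm (norm ((of_nat k - 1)^n * c^k)) \<le> real k ^ n * norm c ^ k"
    unfolding real_norm_def abs_norm_cancel norm_mult norm_power
    by (auto intro!: mult_right_mono power_mono)
qed



lemma del_update_same: "del j (xs[j := x]) = del j xs"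
  by (rule nth_equalityI) (auto simp: nth_del)

lemma norm_del_lt1:
  assumes "\<And>i. i < length w \<Longrightarrow> norm (w!i :: complex) < 1" "i < length w - 1"
  shows "norm (del j w ! i) < 1"
  using assms by (auto simp: nth_del)

lemma norm_mult_lt1:
  fixes x c :: complex
  assumes "norm x < 1" "norm c < 1"
  shows "norm (x * c) < 1"
proof -
  have "norm x * norm c \<le> norm x * 1" by (rule mult_left_mono) (use assms in auto)
  then show ?thesis using assms by (simp add: norm_mult)
qed

lemma norm_upd_lt1:
  fixes w :: "complex list"
  assumes "\<And>i. i < length w \<Longrightarrow> norm (w!i) < 1" "norm c < 1" "i < length w" "j < length w"
  shows "norm (w[j := w!j * c] ! i) < 1"
  using assms norm_mult_lt1[of "w!j" c] by (cases "i = j") auto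

lemma tm_at_j:
  assumes len: "length s = Suc m" "length w = Suc m" and j: "j \<le> m" and ks: "ks \<in> La_index (Suc m)"
  shows "tm (s[j := - int l]) w ks = (w!j)^(ks!j) * of_nat (ks!j)^l * tm (del j s) (del j w) (del j ks)"
proof -
  have lk: "length ks = Suc m" using ks by (simp add: La_index_def)
  have "tm (s[j := - int l]) w ks = tm (s[j := - int l]) w (ins j (ks!j) (del j ks))"
    using ins_nth_del[of j ks] lk j by simp
  also have "\<dots> = (w!j)^(ks!j) / (of_nat (ks!j)) powi (- int l) * tm (del j s) (del j w) (del j ks)"
    using len lk j by (subst tm_ins[where m=m]) (auto simp: del_update_same)
  also have "(w!j)^(ks!j) / (of_nat (ks!j) :: complex) powi (- int l) = (w!j)^(ks!j) * of_nat (ks!j)^l"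
    by (simp add: power_int_minus divide_inverse)
  finally show ?thesis .
qed

lemma core:
  fixes s :: "int list" and w :: "complex list"
  assumes len: "length s = Suc m" "length w = Suc m" and j: "j \<le> m" and sj: "s!j = - int n"
    and wn: "\<And>i. i < Suc m \<Longrightarrow> norm (w!i) < 1"
  shows "(1 - w!j) * La s w + (\<Sum>l<n. of_nat (n choose l) * (-1)^(n-l) * La (s[j := - int l]) w) =
     (if j < m then (\<Sum>a\<le>n. of_nat (n choose a) * (-1)^(n-a) *
          La ((del j s)[j := del j s ! j - int a]) ((del j w)[j := del j w ! j * w!j]))
      else 0^n * w!j * La (del j s) (del j w))
     - (if 0 < j then w!j * La ((del j s)[j-1 := del j s ! (j-1) - int n]) ((del j w)[j-1 := del j w ! (j-1) * w!j]) else 0)"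
    (is "?L = ?R")
proof -
  define c where "c = w!j"
  have c1: "norm c < 1" using wn j by (simp add: c_def)
  define A where "A ks' = tm (del j s) (del j w) ks'" for ks'
  define g where "g k = (of_nat k - 1 :: complex)^n * c^k" for k
  define D where "D ks = A (del j ks) * (g (ks!j) - g (Suc (ks!j)))" for ks
  define co where "co l = (of_nat (n choose l) * (-1)^(n-l) :: complex)" for l
  have sn: "s[j := - int n] = s" unfolding sj[symmetric] by simp
  have step1: "D ks = (1 - c) * tm s w ks + (\<Sum>l<n. co l * tm (s[j := - int l]) w ks)"
    if ks: "ks \<in> La_index (Suc m)" for ks
  proof -
    define k where "k = ks!j"
    have e: "tm (s[j := - int l]) w ks = c^k * of_nat k^l * A (del j ks)" for l
      using tm_at_j[OF len j ks, of l] by (simp add: c_def k_def A_def)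
    have en: "tm s w ks = c^k * of_nat k^n * A (del j ks)"
      using e[of n] sn by simp
    have "D ks = A (del j ks) * ((of_nat k - 1)^n * c^k - of_nat k ^ n * c^Suc k)"
      by (simp add: D_def g_def k_def)
    also have "\<dots> = A (del j ks) * ((of_nat k ^ n + (\<Sum>l<n. co l * of_nat k ^ l)) * c^k - of_nat k ^ n * c^Suc k)"
      by (simp add: binom_minus_one' co_def)
    also have "\<dots> = (1 - c) * (c^k * of_nat k^n * A (del j ks)) + (\<Sum>l<n. co l * (c^k * of_nat k^l * A (del j ks)))"
      by (simp add: sum_distrib_left sum_distrib_right algebra_simps)
    finally show ?thesis by (simp add: e en)
  qed
  have hs: "(tm (s[j := - int l]) w has_sum La (s[j := - int l]) w) (La_index (Suc m))" for l
    by (rule tm_has_sum) (use len wn in auto)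
  have "((\<lambda>ks. (1 - c) * tm s w ks + (\<Sum>l<n. co l * tm (s[j := - int l]) w ks)) has_sum
          ((1 - c) * La s w + (\<Sum>l<n. co l * La (s[j := - int l]) w))) (La_index (Suc m))"
    using hs[of n] sn
    by (intro has_sum_add has_sum_cmult_right has_sum_sum_fin) (auto intro: has_sum_cmult_right hs)
  then have step2: "(D has_sum ?L) (La_index (Suc m))"
    by (subst has_sum_cong[OF step1]) (auto simp: co_def c_def)
  define G where "G ks' = A ks' * (g (lo j ks') - (if 0 < j then g (Suc (ks'!(j-1))) else 0))" for ks'
  have fibsum: "((\<lambda>k. D (ins j k ks')) has_sum G ks') (fib j ks')" if ks': "ks' \<in> La_index m" for ks'
  proof -
    have lk: "length ks' = m" using ks' by (simp add: La_index_def)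
    have jl: "j \<le> length ks'" using lk j by simp
    have Dins: "D (ins j k ks') = A ks' * (g k - g (Suc k))" for k
      unfolding D_def del_ins[OF jl] ins_nth_same[OF jl] ..
    show ?thesis
    proof (cases "0 < j")
      case True
      have le: "lo j ks' \<le> ks'!(j-1)"
      proof (cases "j < m")
        case True
        have "Suc (j-1) < m" using True \<open>0 < j\<close> by simp
        then have "ks'!Suc (j-1) \<le> ks'!(j-1)" using ks' unfolding La_index_nth by blast
        moreover have "Suc (j-1) = j" using \<open>0 < j\<close> by simp
        ultimately show ?thesis using True lk by (simp add: lo_def)
      next
        case False
        then show ?thesis using ks' \<open>0 < j\<close> j unfolding La_index_nth lo_def by (auto simp: lk)
      qed
      have fe: "fib j ks' = {lo j ks'..ks'!(j-1)}" using True by (auto simp: fib_def)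
      have "(\<Sum>k\<in>{lo j ks'..ks'!(j-1)}. g k - g (Suc k)) = - (\<Sum>k\<in>{lo j ks'..ks'!(j-1)}. g (Suc k) - g k)"
        by (simp add: sum_negf[symmetric])
      also have "\<dots> = g (lo j ks') - g (Suc (ks'!(j-1)))"
        using le by (subst sum_Suc_diff) auto
      finally have "(\<Sum>k\<in>fib j ks'. A ks' * (g k - g (Suc k))) = G ks'"
        using True fe by (simp add: G_def sum_distrib_left[symmetric])
      then show ?thesis unfolding Dins using fe by (intro has_sum_finiteI) auto
    next
      case False
      then have fe: "fib j ks' = {lo j ks'..}" by (auto simp: fib_def)
      have "((\<lambda>k. g k - g (Suc k)) has_sum g (lo j ks')) {lo j ks'..}"
        by (rule tail_telescope) (use g_summable[OF c1] in \<open>simp add: g_def\<close>)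
      then show ?thesis unfolding Dins fe G_def using False by (auto intro: has_sum_cmult_right)
    qed
  qed
  have step3: "(G has_sum ?L) (La_index m)"
    by (rule has_sum_split[OF step2 j fibsum])
  have ldw: "length (del j w) = m" "length (del j s) = m" using len by auto
  have ndw: "norm (del j w ! i) < 1" if "i < m" for i
    using norm_del_lt1[of w i j] wn that len by auto
  define s1 where "s1 a = (del j s)[j := del j s ! j - int a]" for a
  define w1 where "w1 = (del j w)[j := del j w ! j * c]"
  define s2 where "s2 = (del j s)[j-1 := del j s ! (j-1) - int n]"
  define w2 where "w2 = (del j w)[j-1 := del j w ! (j-1) * c]"
  define T1 where "T1 ks' = A ks' * g (lo j ks')" for ks'
  define T2 where "T2 ks' = (if 0 < j then A ks' * g (Suc (ks'!(j-1))) else 0)" for ks'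
  define V1 where "V1 = (if j < m then (\<Sum>a\<le>n. co a * La (s1 a) w1) else 0^n * c * La (del j s) (del j w))"
  define V2 where "V2 = (if 0 < j then c * La s2 w2 else 0)"
  have hT1: "(T1 has_sum V1) (La_index m)"
  proof (cases "j < m")
    case True
    have eq: "T1 ks' = (\<Sum>a\<le>n. co a * tm (s1 a) w1 ks')" if ks': "ks' \<in> La_index m" for ks'
    proof -
      have lk: "length ks' = m" and k1: "1 \<le> ks'!j" using ks' True by (auto simp: La_index_nth)
      have "T1 ks' = (\<Sum>a\<le>n. co a * (A ks' * of_nat (ks'!j)^a * c^(ks'!j)))"
        unfolding T1_def g_def lo_def using True lk
        by (simp add: binom_minus_one co_def sum_distrib_left sum_distrib_right mult_ac)
      also have "\<dots> = (\<Sum>a\<le>n. co a * tm (s1 a) w1 ks')"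
        unfolding A_def s1_def w1_def using True ldw k1
        by (intro sum.cong refl arg_cong2[where f="(*)"] tm_update) auto
      finally show ?thesis .
    qed
    have "((\<lambda>ks'. \<Sum>a\<le>n. co a * tm (s1 a) w1 ks') has_sum (\<Sum>a\<le>n. co a * La (s1 a) w1)) (La_index m)"
    proof (intro has_sum_sum_fin has_sum_cmult_right tm_has_sum)
      fix a i assume "i < m"
      then show "norm (w1 ! i) < 1" unfolding w1_def
        using norm_upd_lt1[of "del j w" c i j] ndw c1 True ldw by auto
    qed (auto simp: s1_def w1_def len)
    then show ?thesis unfolding V1_def using True by (subst has_sum_cong[OF eq]) auto
  next
    case False
    then have jm: "j = m" using j by simp
    have eq: "T1 ks' = (0^n * c) * A ks'" if ks': "ks' \<in> La_index m" for ks'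
      using ks' jm by (simp add: T1_def lo_def g_def La_index_def)
    have "(A has_sum La (del j s) (del j w)) (La_index m)"
      unfolding A_def by (rule tm_has_sum) (use ldw ndw in auto)
    then show ?thesis unfolding V1_def using False
      by (subst has_sum_cong[OF eq]) (auto intro: has_sum_cmult_right)
  qed
  have hT2: "(T2 has_sum V2) (La_index m)"
  proof (cases "0 < j")
    case True
    have eq: "T2 ks' = c * tm s2 w2 ks'" if ks': "ks' \<in> La_index m" for ks'
    proof -
      have lk: "length ks' = m" and k1: "1 \<le> ks'!(j-1)" using ks' True j by (auto simp: La_index_nth)
      have "T2 ks' = c * (A ks' * of_nat (ks'!(j-1))^n * c^(ks'!(j-1)))"
        unfolding T2_def g_def using True by (simp add: mult_ac)
      also have "\<dots> = c * tm s2 w2 ks'"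
        unfolding A_def s2_def w2_def using True ldw k1 j
        by (subst tm_update) auto
      finally show ?thesis .
    qed
    have "(tm s2 w2 has_sum La s2 w2) (La_index m)"
    proof (rule tm_has_sum)
      fix i assume "i < m"
      then show "norm (w2 ! i) < 1" unfolding w2_def
        using norm_upd_lt1[of "del j w" c i "j-1"] ndw c1 True ldw j by auto
    qed (auto simp: s2_def w2_def len)
    then show ?thesis unfolding V2_def using True
      by (subst has_sum_cong[OF eq]) (auto intro: has_sum_cmult_right)
  next
    case False
    then have "T2 = (\<lambda>_. 0)" by (auto simp: T2_def)
    then show ?thesis using False by (simp add: V2_def)
  qed
  have "((\<lambda>ks'. T1 ks' + - T2 ks') has_sum (V1 + - V2)) (La_index m)"
    by (intro has_sum_add has_sum_uminusI hT1 hT2)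
  moreover have "G = (\<lambda>ks'. T1 ks' + - T2 ks')"
    by (auto simp: G_def T1_def T2_def algebra_simps)
  ultimately have "(G has_sum (V1 - V2)) (La_index m)" by simp
  then have "?L = V1 - V2" using step3 has_sum_unique by blast
  also have "V1 - V2 = ?R"
    by (simp add: V1_def V2_def s1_def w1_def s2_def w2_def co_def c_def)
  finally show ?thesis .
qed



definition mapP :: "complex list \<Rightarrow> nat set list \<Rightarrow> complex list" where
  "mapP z Js = map (\<lambda>J. \<Prod>j\<in>J. z ! j) Js"

definition Dom :: "nat \<Rightarrow> complex list \<Rightarrow> bool" where
  "Dom p z \<longleftrightarrow> length z = p \<and> (\<forall>j<p. norm (z ! j) < 1 \<and> z ! j \<noteq> 0)"

definition validJs :: "nat \<Rightarrow> nat set list \<Rightarrow> bool" where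
  "validJs p Js \<longleftrightarrow> (\<forall>J\<in>set Js. J \<noteq> {} \<and> J \<subseteq> {..<p}) \<and>
     (\<forall>a b. a < length Js \<longrightarrow> b < length Js \<longrightarrow> a \<noteq> b \<longrightarrow> Js!a \<inter> Js!b = {})"

definition okterm :: "nat \<Rightarrow> nat \<Rightarrow> int \<Rightarrow> cexpr \<times> int list \<times> nat set list \<Rightarrow> bool" where
  "okterm p L B t \<longleftrightarrow> (case t of (c, s', Js) \<Rightarrow>
        cexpr_wf p c
      \<and> length s' \<le> L
      \<and> (\<forall>j<length s'. s' ! j \<ge> 1)
      \<and> sum_list s' \<le> B
      \<and> length Js = length s'
      \<and> (\<forall>J\<in>set Js. J \<noteq> {} \<and> J \<subseteq> {..<p}))"

definition evt :: "complex list \<Rightarrow> cexpr \<times> int list \<times> nat set list \<Rightarrow> complex" where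
  "evt z t = (case t of (c, s', Js) \<Rightarrow> ceval c z * La s' (mapP z Js))"

definition Good :: "nat \<Rightarrow> nat \<Rightarrow> int \<Rightarrow> (complex list \<Rightarrow> complex) \<Rightarrow> bool" where
  "Good p L B f \<longleftrightarrow> (\<exists>terms. (\<forall>t\<in>set terms. okterm p L B t)
    \<and> (\<forall>z. Dom p z \<longrightarrow> f z = sum_list (map (evt z) terms)))"

lemma Good_0: "Good p L B (\<lambda>z. 0)"
  unfolding Good_def by (rule exI[of _ "[]"]) simp

lemma Good_add:
  assumes "Good p L B f" "Good p L B g"
  shows "Good p L B (\<lambda>z. f z + g z)"
proof -
  obtain t1 where t1: "\<forall>t\<in>set t1. okterm p L B t" "\<forall>z. Dom p z \<longrightarrow> f z = sum_list (map (evt z) t1)"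
    using assms(1) unfolding Good_def by blast
  obtain t2 where t2: "\<forall>t\<in>set t2. okterm p L B t" "\<forall>z. Dom p z \<longrightarrow> g z = sum_list (map (evt z) t2)"
    using assms(2) unfolding Good_def by blast
  show ?thesis unfolding Good_def
    by (rule exI[of _ "t1 @ t2"]) (use t1 t2 in auto)
qed

lemma Good_mul:
  assumes "cexpr_wf p c" "Good p L B f"
  shows "Good p L B (\<lambda>z. ceval c z * f z)"
proof -
  obtain t1 where t1: "\<forall>t\<in>set t1. okterm p L B t" "\<forall>z. Dom p z \<longrightarrow> f z = sum_list (map (evt z) t1)"
    using assms(2) unfolding Good_def by blast
  define mc :: "cexpr \<times> int list \<times> nat set list \<Rightarrow> cexpr \<times> int list \<times> nat set list"
    where "mc t = (case t of (c', s', Js) \<Rightarrow> (CMul c c', s', Js))" for t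
  define t2 where "t2 = map mc t1"
  have ev: "evt z (mc t) = ceval c z * evt z t" for z t
    by (cases t) (auto simp: evt_def mc_def)
  have ok: "okterm p L B (mc t)" if "okterm p L B t" for t
    using that assms(1) by (cases t) (auto simp: okterm_def mc_def)
  have "ceval c z * sum_list (map (evt z) t1) = sum_list (map (evt z) t2)" for z
    unfolding t2_def by (induction t1) (auto simp: algebra_simps ev)
  then show ?thesis unfolding Good_def
    by (intro exI[of _ t2]) (use t1 ok in \<open>auto simp: t2_def\<close>)
qed

lemma Good_cong:
  assumes "Good p L B f" "\<And>z. Dom p z \<Longrightarrow> f z = g z"
  shows "Good p L B g"
  using assms unfolding Good_def by metis

lemma Good_sum:
  assumes "finite I" "\<And>i. i \<in> I \<Longrightarrow> Good p L B (f i)"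
  shows "Good p L B (\<lambda>z. \<Sum>i\<in>I. f i z)"
  using assms
proof (induction I rule: finite_induct)
  case empty then show ?case by (simp add: Good_0)
next
  case (insert a F)
  then show ?case by (simp add: Good_add)
qed

lemma Good_base:
  assumes "length s \<le> L" "\<forall>i<length s. 1 \<le> s!i" "sum_list (map (max 0) s) \<le> B"
    "length Js = length s" "validJs p Js"
  shows "Good p L B (\<lambda>z. La s (mapP z Js))"
proof -
  have "map (max 0) s = s" using assms(2) by (intro map_idI) (auto simp: in_set_conv_nth)
  then show ?thesis using assms unfolding Good_def validJs_def
    by (intro exI[of _ "[(CConst 1, s, Js)]"]) (auto simp: okterm_def evt_def)
qed

definition cprod :: "nat set \<Rightarrow> cexpr" where
  "cprod J = foldr (\<lambda>j c. CMul (CZ j) c) (sorted_list_of_set J) (CConst 1)"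

lemma ceval_foldr: "ceval (foldr (\<lambda>j c. CMul (CZ j) c) xs (CConst 1)) z = prod_list (map (\<lambda>j. z!j) xs)"
  by (induction xs) auto

lemma wf_foldr: "set xs \<subseteq> {..<p} \<Longrightarrow> cexpr_wf p (foldr (\<lambda>j c. CMul (CZ j) c) xs (CConst 1))"
  by (induction xs) auto

lemma ceval_cprod: "finite J \<Longrightarrow> ceval (cprod J) z = (\<Prod>j\<in>J. z!j)"
  unfolding cprod_def ceval_foldr
  by (metis distinct_sorted_list_of_set prod.distinct_set_conv_list set_sorted_list_of_set)

lemma wf_cprod: "J \<subseteq> {..<p} \<Longrightarrow> cexpr_wf p (cprod J)"
  unfolding cprod_def using finite_subset[of J "{..<p}"]
  by (intro wf_foldr) auto

lemma prod_lt1: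
  fixes f :: "nat \<Rightarrow> real"
  assumes "finite J" "J \<noteq> {}" "\<And>j. j \<in> J \<Longrightarrow> 0 \<le> f j \<and> f j < 1"
  shows "(\<Prod>j\<in>J. f j) < 1"
  using assms
proof (induction J rule: finite_ne_induct)
  case (singleton x) then show ?case by simp
next
  case (insert x F)
  have "(\<Prod>j\<in>F. f j) < 1" "0 \<le> (\<Prod>j\<in>F. f j)" "0 \<le> f x" "f x < 1"
    using insert by (auto intro: prod_nonneg)
  then have "f x * (\<Prod>j\<in>F. f j) \<le> f x * 1"
    by (intro mult_left_mono) auto
  then have "f x * (\<Prod>j\<in>F. f j) < 1"
    using \<open>f x < 1\<close> by linarith
  then show ?case using insert by simp
qed

lemma norm_mapP:
  assumes "Dom p z" "validJs p Js" "i < length Js"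
  shows "norm (mapP z Js ! i) < 1"
proof -
  have J: "Js!i \<noteq> {}" "Js!i \<subseteq> {..<p}" using assms(2,3) nth_mem unfolding validJs_def by blast+
  then have fin: "finite (Js!i)" using finite_subset by blast
  have "norm (mapP z Js ! i) = (\<Prod>j\<in>Js!i. norm (z!j))"
    using assms(3) by (simp add: mapP_def prod_norm)
  also have "\<dots> < 1"
    by (rule prod_lt1[OF fin J(1)]) (use J assms(1) in \<open>auto simp: Dom_def\<close>)
  finally show ?thesis .
qed

lemma mapP_upd:
  assumes "t < length Js - 1" "j < length Js" "finite (del j Js ! t)" "finite (Js!j)"
    "del j Js ! t \<inter> Js!j = {}"
  shows "mapP z ((del j Js)[t := del j Js ! t \<union> Js!j]) =
         (del j (mapP z Js))[t := del j (mapP z Js) ! t * mapP z Js ! j]"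
  using assms unfolding mapP_def
  by (auto simp: map_update prod.union_disjoint nth_del del_map)

lemma mapP_del: "mapP z (del j Js) = del j (mapP z Js)"
  by (simp add: mapP_def del_map)

lemma del_append: "j < length xs \<Longrightarrow> del j xs = take j xs @ drop (Suc j) xs"
  by (rule nth_equalityI) (auto simp: nth_del nth_append min_def)

definition sumpos :: "int list \<Rightarrow> int" where
  "sumpos xs = sum_list (map (max 0) xs)"

lemma sumpos_del: "j < length xs \<Longrightarrow> sumpos (del j xs) \<le> sumpos xs"
proof -
  assume j: "j < length xs"
  have "sumpos xs = sumpos (take j xs @ xs!j # drop (Suc j) xs)"
    using id_take_nth_drop[OF j] by simp
  also have "\<dots> = sumpos (del j xs) + max 0 (xs!j)"
    using j by (simp add: sumpos_def del_append)
  finally show ?thesis by simp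
qed

lemma sumpos_upd: "t < length xs \<Longrightarrow> sumpos (xs[t := x]) = sumpos xs + max 0 x - max 0 (xs!t)"
proof -
  assume t: "t < length xs"
  have "sumpos xs = sumpos (take t xs @ xs!t # drop (Suc t) xs)"
    using id_take_nth_drop[OF t] by simp
  moreover have "sumpos (xs[t := x]) = sumpos (take t xs @ x # drop (Suc t) xs)"
    using upd_conv_take_nth_drop[OF t] by simp
  ultimately show ?thesis by (simp add: sumpos_def)
qed

lemma nth_del': "i < length xs - 1 \<Longrightarrow> del j xs ! i = xs ! (if i < j then i else Suc i)"
  by (simp add: nth_del)

lemma validJs_del:
  assumes "validJs p Js" "j < length Js"
  shows "validJs p (del j Js)"
proof -
  have V: "\<And>J. J \<in> set Js \<Longrightarrow> J \<noteq> {} \<and> J \<subseteq> {..<p}"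
    "\<And>a b. a < length Js \<Longrightarrow> b < length Js \<Longrightarrow> a \<noteq> b \<Longrightarrow> Js!a \<inter> Js!b = {}"
    using assms(1) unfolding validJs_def by blast+
  have "del j Js ! i \<noteq> {} \<and> del j Js ! i \<subseteq> {..<p}" if "i < length Js - 1" for i
    using that V(1)[of "Js ! (if i < j then i else Suc i)"] by (auto simp: nth_del')
  moreover have "del j Js ! a \<inter> del j Js ! b = {}" if "a < length Js - 1" "b < length Js - 1" "a \<noteq> b" for a b
  proof -
    define f where "f i = (if i < j then i else Suc i)" for i
    have fl: "f i < length Js" if "i < length Js - 1" for i using that by (auto simp: f_def)
    have finj: "f a \<noteq> f b" using that by (auto simp: f_def)
    have "Js ! f a \<inter> Js ! f b = {}" using V(2) fl that finj by blast
    then show ?thesis using that by (simp add: nth_del' f_def)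
  qed
  ultimately show ?thesis unfolding validJs_def all_set_conv_all_nth length_del length_list_update by blast
qed

lemma validJs_merge:
  assumes "validJs p Js" "j < length Js" "t < length Js - 1"
  shows "validJs p ((del j Js)[t := del j Js ! t \<union> Js!j])"
proof -
  have V: "\<And>J. J \<in> set Js \<Longrightarrow> J \<noteq> {} \<and> J \<subseteq> {..<p}"
    "\<And>a b. a < length Js \<Longrightarrow> b < length Js \<Longrightarrow> a \<noteq> b \<Longrightarrow> Js!a \<inter> Js!b = {}"
    using assms(1) unfolding validJs_def by blast+
  define f where "f i = (if i < j then i else Suc i)" for i
  have fl: "f i < length Js" "f i \<noteq> j" if "i < length Js - 1" for i using that by (auto simp: f_def)
  have finj: "f a \<noteq> f b" if "a \<noteq> b" for a b using that by (auto simp: f_def)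
  have D: "del j Js ! i = Js ! f i" if "i < length Js - 1" for i using that by (simp add: nth_del' f_def)
  let ?K = "(del j Js)[t := del j Js ! t \<union> Js!j]"
  have K: "?K ! i = (if i = t then Js ! f t \<union> Js ! j else Js ! f i)" if "i < length Js - 1" for i
    using that assms(3) D by (auto simp: nth_list_update)
  have "?K ! i \<noteq> {} \<and> ?K ! i \<subseteq> {..<p}" if "i < length Js - 1" for i
    using that K[OF that] V(1)[of "Js ! f i"] V(1)[of "Js ! j"] V(1)[of "Js ! f t"] fl[OF that] fl[OF assms(3)] assms(2)
    by (auto split: if_splits)
  moreover have "?K ! a \<inter> ?K ! b = {}" if "a < length Js - 1" "b < length Js - 1" "a \<noteq> b" for a b
  proof -
    have "Js ! f a \<inter> Js ! f b = {}" using V(2) fl that finj by blast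
    moreover have "Js ! f a \<inter> Js ! j = {}" "Js ! f b \<inter> Js ! j = {}" using V(2) fl that assms(2) by blast+
    ultimately show ?thesis using K that by auto
  qed
  ultimately show ?thesis unfolding validJs_def all_set_conv_all_nth length_del length_list_update by blast
qed



lemma ceval_co: "(of_rat (of_nat k * (-1)^e) :: complex) = of_nat k * (-1)^e"
  by (simp add: of_rat_mult of_rat_power)

lemma reduce_step:
  assumes IHout: "\<And>s2 Js2. length s2 < Suc m \<Longrightarrow> length s2 = length Js2 \<Longrightarrow> validJs p Js2 \<Longrightarrow>
        length s2 \<le> L \<Longrightarrow> sumpos s2 \<le> B \<Longrightarrow> Good p L B (\<lambda>z. La s2 (mapP z Js2))"
    and IHin: "\<And>l. l < n \<Longrightarrow> Good p L B (\<lambda>z. La (s[j := - int l]) (mapP z Js))"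
    and len: "length s = Suc m" "length Js = Suc m" and j: "j \<le> m" and sj: "s!j = - int n"
    and V: "validJs p Js" and Lb: "Suc m \<le> L" and Bb: "sumpos s \<le> B"
  shows "Good p L B (\<lambda>z. La s (mapP z Js))"
proof -
  have VV: "\<And>J. J \<in> set Js \<Longrightarrow> J \<noteq> {} \<and> J \<subseteq> {..<p}"
    "\<And>a b. a < length Js \<Longrightarrow> b < length Js \<Longrightarrow> a \<noteq> b \<Longrightarrow> Js!a \<inter> Js!b = {}"
    using V unfolding validJs_def by blast+
  have Jj: "Js!j \<noteq> {}" "Js!j \<subseteq> {..<p}" using VV(1)[of "Js!j"] len j by auto
  have finJ: "finite (Js!i)" if "i < Suc m" for i
    using VV(1)[of "Js!i"] len that finite_subset[of "Js!i" "{..<p}"] by auto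
  define P where "P z = (\<Prod>i\<in>Js!j. z!i)" for z :: "complex list"
  have cP: "ceval (cprod (Js!j)) z = P z" for z using ceval_cprod[OF finJ[of j]] j by (simp add: P_def)
  have wfP: "cexpr_wf p (cprod (Js!j))" by (rule wf_cprod[OF Jj(2)])
  have sdel: "sumpos (del j s) \<le> sumpos s" using sumpos_del[of j s] len j by simp
  define s1 where "s1 a = (del j s)[j := del j s ! j - int a]" for a
  define Js1 where "Js1 = (del j Js)[j := del j Js ! j \<union> Js!j]"
  define R1 where "R1 z = (if j < m then (\<Sum>a\<le>n. of_nat (n choose a) * (-1)^(n-a) * La (s1 a) (mapP z Js1))
      else 0^n * P z * La (del j s) (mapP z (del j Js)))" for z
  have G1: "Good p L B R1"
  proof (cases "j < m")
    case True
    have "Good p L B (\<lambda>z. La (s1 a) (mapP z Js1))" for a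
    proof (rule IHout)
      show "validJs p Js1" unfolding Js1_def by (rule validJs_merge[OF V]) (use len True in auto)
      have "sumpos (s1 a) \<le> sumpos (del j s)"
        unfolding s1_def using len True by (subst sumpos_upd) auto
      then show "sumpos (s1 a) \<le> B" using sdel Bb by linarith
    qed (use len Lb True in \<open>auto simp: s1_def Js1_def\<close>)
    then have "Good p L B (\<lambda>z. \<Sum>a\<le>n. ceval (CConst (of_nat (n choose a) * (-1)^(n-a))) z * La (s1 a) (mapP z Js1))"
      by (intro Good_sum Good_mul) auto
    then show ?thesis
      by (rule Good_cong) (use True in \<open>simp add: R1_def ceval_co\<close>)
  next
    case False
    have "Good p L B (\<lambda>z. La (del j s) (mapP z (del j Js)))"
      by (rule IHout) (use len Lb j validJs_del[OF V] sdel Bb in auto)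
    then have "Good p L B (\<lambda>z. ceval (CMul (CConst (0^n)) (cprod (Js!j))) z * La (del j s) (mapP z (del j Js)))"
      by (intro Good_mul) (auto simp: wfP)
    then show ?thesis
      by (rule Good_cong) (use False in \<open>simp add: R1_def cP of_rat_power\<close>)
  qed
  define s2 where "s2 = (del j s)[j-1 := del j s ! (j-1) - int n]"
  define Js2 where "Js2 = (del j Js)[j-1 := del j Js ! (j-1) \<union> Js!j]"
  define R2 where "R2 z = (if 0 < j then P z * La s2 (mapP z Js2) else 0)" for z
  have G2: "Good p L B R2"
  proof (cases "0 < j")
    case True
    have "Good p L B (\<lambda>z. La s2 (mapP z Js2))"
    proof (rule IHout)
      show "validJs p Js2" unfolding Js2_def by (rule validJs_merge[OF V]) (use len True j in auto)
      have "sumpos s2 \<le> sumpos (del j s)"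
        unfolding s2_def using len True j by (subst sumpos_upd) auto
      then show "sumpos s2 \<le> B" using sdel Bb by linarith
    qed (use len Lb True j in \<open>auto simp: s2_def Js2_def\<close>)
    then have "Good p L B (\<lambda>z. ceval (cprod (Js!j)) z * La s2 (mapP z Js2))"
      by (intro Good_mul wfP)
    then show ?thesis
      by (rule Good_cong) (use True in \<open>simp add: R2_def cP\<close>)
  next
    case False
    then have "R2 = (\<lambda>z. 0)" by (auto simp: R2_def)
    then show ?thesis using Good_0 by simp
  qed
  define S where "S z = (\<Sum>l<n. of_nat (n choose l) * (-1)^(n-l) * La (s[j := - int l]) (mapP z Js))" for z
  have GS: "Good p L B S"
  proof -
    have "Good p L B (\<lambda>z. \<Sum>l<n. ceval (CConst (of_nat (n choose l) * (-1)^(n-l))) z * La (s[j := - int l]) (mapP z Js))"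
      by (intro Good_sum Good_mul IHin) auto
    then show ?thesis by (rule Good_cong) (simp add: S_def ceval_co)
  qed
  have GT: "Good p L B (\<lambda>z. ceval (CInvOneMinus (Js!j)) z *
        (R1 z + (ceval (CConst (-1)) z * R2 z + ceval (CConst (-1)) z * S z)))"
    by (intro Good_mul Good_add G1 G2 GS) (use Jj in auto)
  show ?thesis
  proof (rule Good_cong[OF GT])
    fix z assume D: "Dom p z"
    define w where "w = mapP z Js"
    have lw: "length w = Suc m" using len by (simp add: w_def mapP_def)
    have wn: "norm (w!i) < 1" if "i < Suc m" for i
      using norm_mapP[OF D V, of i] that len by (simp add: w_def)
    have wj: "w!j = P z" using j len by (simp add: w_def mapP_def P_def)
    have core': "(1 - w!j) * La s w + (\<Sum>l<n. of_nat (n choose l) * (-1)^(n-l) * La (s[j := - int l]) w) =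
     (if j < m then (\<Sum>a\<le>n. of_nat (n choose a) * (-1)^(n-a) *
          La ((del j s)[j := del j s ! j - int a]) ((del j w)[j := del j w ! j * w!j]))
      else 0^n * w!j * La (del j s) (del j w))
     - (if 0 < j then w!j * La ((del j s)[j-1 := del j s ! (j-1) - int n]) ((del j w)[j-1 := del j w ! (j-1) * w!j]) else 0)"
      by (rule core[OF len(1) lw j sj wn])
    have E1: "(if j < m then (\<Sum>a\<le>n. of_nat (n choose a) * (-1)^(n-a) *
          La ((del j s)[j := del j s ! j - int a]) ((del j w)[j := del j w ! j * w!j]))
      else 0^n * w!j * La (del j s) (del j w)) = R1 z"
    proof (cases "j < m")
      case True
      have "(del j w)[j := del j w ! j * w!j] = mapP z Js1"
        unfolding w_def Js1_def
      proof (rule mapP_upd[symmetric])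
        show "del j Js ! j \<inter> Js ! j = {}" using VV(2)[of "Suc j" j] True len by (simp add: nth_del)
        show "finite (del j Js ! j)" using finJ[of "Suc j"] True len by (simp add: nth_del)
      qed (use True len finJ[of j] in auto)
      then show ?thesis using True by (simp add: R1_def s1_def)
    next
      case False
      have "del j w = mapP z (del j Js)" by (simp add: w_def mapP_del)
      then show ?thesis using False by (simp add: R1_def wj)
    qed
    have E2: "(if 0 < j then w!j * La ((del j s)[j-1 := del j s ! (j-1) - int n]) ((del j w)[j-1 := del j w ! (j-1) * w!j]) else 0) = R2 z"
    proof (cases "0 < j")
      case True
      have "(del j w)[j-1 := del j w ! (j-1) * w!j] = mapP z Js2"
        unfolding w_def Js2_def
      proof (rule mapP_upd[symmetric])
        show "del j Js ! (j-1) \<inter> Js ! j = {}" using VV(2)[of "j-1" j] True len j by (simp add: nth_del)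
        show "finite (del j Js ! (j-1))" using finJ[of "j-1"] True len j by (simp add: nth_del)
      qed (use True len j finJ[of j] in auto)
      then show ?thesis using True by (simp add: R2_def s2_def wj)
    next
      case False
      then show ?thesis by (simp add: R2_def)
    qed
    have ES: "(\<Sum>l<n. of_nat (n choose l) * (-1)^(n-l) * La (s[j := - int l]) w) = S z"
      by (simp add: S_def w_def)
    have main0: "(1 - w!j) * La s w + S z = R1 z - R2 z"
      using core' unfolding E1 E2 ES .
    then have main: "(1 - P z) * La s w + S z = R1 z - R2 z" by (simp only: wj)
    have "norm (P z) < 1" using wn[of j] j wj by simp
    then have nz: "1 - P z \<noteq> 0" by auto
    have ci: "ceval (CInvOneMinus (Js!j)) z = inverse (1 - P z)" by (simp add: P_def)
    show "ceval (CInvOneMinus (Js!j)) z * (R1 z + (ceval (CConst (-1)) z * R2 z + ceval (CConst (-1)) z * S z)) =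
          La s (mapP z Js)"
      unfolding ci using main nz unfolding w_def[symmetric]
      by (simp add: field_simps)
  qed
qed



lemma main_good:
  "length s = length Js \<Longrightarrow> validJs p Js \<Longrightarrow> length s \<le> L \<Longrightarrow> sumpos s \<le> B \<Longrightarrow>
   Good p L B (\<lambda>z. La s (mapP z Js))"
proof (induction "length s" arbitrary: s Js rule: less_induct)
  case less
  note IHo = less.hyps
  note pr = less.prems
  show ?case
  proof (cases "\<forall>i<length s. 1 \<le> s!i")
    case True
    have sb: "sum_list (map (max 0) s) \<le> B" using pr(4) unfolding sumpos_def .
    show ?thesis by (rule Good_base[OF pr(3) True sb pr(1)[symmetric] pr(2)])
  next
    case False
    then obtain j where j: "j < length s" "s!j \<le> 0" by (auto simp: not_le)
    obtain m where m: "length s = Suc m" using j(1) by (cases "length s") auto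
    have jm: "j \<le> m" using j m by simp
    have key: "\<forall>s'. length s' = Suc m \<longrightarrow> s'!j = - int n \<longrightarrow> sumpos s' \<le> B \<longrightarrow> Good p L B (\<lambda>z. La s' (mapP z Js))" for n
    proof (induction n rule: less_induct)
      case (less n)
      show ?case
      proof (intro allI impI)
        fix s' :: "int list" assume s': "length s' = Suc m" "s'!j = - int n" "sumpos s' \<le> B"
        show "Good p L B (\<lambda>z. La s' (mapP z Js))"
        proof (rule reduce_step[where m=m and n=n and j=j])
          fix s2 :: "int list" and Js2
          assume "length s2 < Suc m" "length s2 = length Js2" "validJs p Js2" "length s2 \<le> L" "sumpos s2 \<le> B"
          then show "Good p L B (\<lambda>z. La s2 (mapP z Js2))" using IHo m by auto
        next
          fix l assume l: "l < n"
          have "sumpos (s'[j := - int l]) = sumpos s'"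
            using s' jm by (subst sumpos_upd) auto
          then show "Good p L B (\<lambda>z. La (s'[j := - int l]) (mapP z Js))"
            using less.IH[OF l] s' jm by auto
        qed (use s' m pr jm in auto)
      qed
    qed
    have "s!j = - int (nat (- s!j))" using j by simp
    then show ?thesis using key[of "nat (- s!j)"] m pr by auto
  qed
qed

theorem mainTheorem8:
  fixes s :: "int list"
  assumes "length s \<ge> 1"
    and "\<exists>j<length s. s ! j \<le> 0"
  shows "\<exists>terms :: (cexpr \<times> int list \<times> nat set list) list.
    (\<forall>(c, s', Js) \<in> set terms.
        cexpr_wf (length s) c
      \<and> length s' \<le> length s
      \<and> (\<forall>j<length s'. s' ! j \<ge> 1)
      \<and> sum_list s' \<le> sum_list (map (\<lambda>x. max 0 x) s)
      \<and> length Js = length s'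
      \<and> (\<forall>J\<in>set Js. J \<noteq> {} \<and> J \<subseteq> {..<length s}))
    \<and> (\<forall>z :: complex list. length z = length s \<longrightarrow>
          (\<forall>j<length z. norm (z ! j) < 1 \<and> z ! j \<noteq> 0) \<longrightarrow>
          La s z = sum_list (map (\<lambda>(c, s', Js).
                      ceval c z * La s' (map (\<lambda>J. \<Prod>j\<in>J. z ! j) Js)) terms))"
proof -
  define p where "p = length s"
  define Js0 where "Js0 = map (\<lambda>i. {i}) [0..<p]"
  have V: "validJs p Js0" unfolding validJs_def Js0_def by auto
  have "Good p (length s) (sumpos s) (\<lambda>z. La s (mapP z Js0))"
    by (rule main_good) (use V in \<open>auto simp: Js0_def p_def\<close>)
  then obtain terms where T: "\<forall>t\<in>set terms. okterm p (length s) (sumpos s) t"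
    "\<forall>z. Dom p z \<longrightarrow> La s (mapP z Js0) = sum_list (map (evt z) terms)"
    unfolding Good_def by blast
  have mz: "mapP z Js0 = z" if "length z = p" for z :: "complex list"
    using that by (intro nth_equalityI) (auto simp: mapP_def Js0_def)
  have ev: "evt z = (\<lambda>(c, s', Js). ceval c z * La s' (map (\<lambda>J. \<Prod>j\<in>J. z ! j) Js))" for z
    by (auto simp: evt_def mapP_def fun_eq_iff)
  show ?thesis
  proof (intro exI[of _ terms] conjI allI impI)
    show "\<forall>(c, s', Js) \<in> set terms.
        cexpr_wf (length s) c
      \<and> length s' \<le> length s
      \<and> (\<forall>j<length s'. s' ! j \<ge> 1)
      \<and> sum_list s' \<le> sum_list (map (\<lambda>x. max 0 x) s)
      \<and> length Js = length s'
      \<and> (\<forall>J\<in>set Js. J \<noteq> {} \<and> J \<subseteq> {..<length s})"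
      using T(1) unfolding okterm_def sumpos_def p_def by (auto split: prod.splits)
  next
    fix z :: "complex list"
    assume z: "length z = length s" "\<forall>j<length z. norm (z ! j) < 1 \<and> z ! j \<noteq> 0"
    then have "Dom p z" by (auto simp: Dom_def p_def)
    then have "La s (mapP z Js0) = sum_list (map (evt z) terms)" using T(2) by blast
    then show "La s z = sum_list (map (\<lambda>(c, s', Js).
                      ceval c z * La s' (map (\<lambda>J. \<Prod>j\<in>J. z ! j) Js)) terms)"
      using mz[of z] z(1) by (simp add: p_def ev)
  qed
qed

end
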